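(* Let $n\ge4$, $x_1,\dots,x_{n-1}>0$, $\gamma,\delta>0$ with $\gamma\ne1\ne\delta$, $x_0=1$, and let $\mathbf{P}$ be the $n\times n$ matrix with entries $p_{ij}=x_{j-1}/x_{i-1}$ except $p_{12}=\delta x_1$, $p_{21}=1/(\delta x_1)$, $p_{13}=\gamma x_2$, $p_{31}=1/(\gamma x_2)$. Let $\mathbf{w}^{EM}$ be the principal right eigenvector of $\mathbf{P}$. If $\gamma,\delta<1$, then $w_1^{EM}/w_i^{EM}<x_{i-1}$ for $i=4,\dots,n$.
   Context: The principal right eigenvector is the positive (Perron) eigenvector belonging to the largest eigenvalue. *)

theory Defs
  imports Complex_Main
begin

text \<open>Matrices are n x n, indexed by 1..n, as functions nat => nat => real.\<close>

definition EM_matrix :: "(nat \<Rightarrow> real) \<Rightarrow> real \<Rightarrow> real \<Rightarrow> nat \<Rightarrow> nat \<Rightarrow> real" where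
  "EM_matrix x \<gamma> \<delta> i j =
     (let xx = (\<lambda>k. if k = 0 then 1 else x k) in
      if i = 1 \<and> j = 2 then \<delta> * x 1
      else if i = 2 \<and> j = 1 then 1 / (\<delta> * x 1)
      else if i = 1 \<and> j = 3 then \<gamma> * x 2
      else if i = 3 \<and> j = 1 then 1 / (\<gamma> * x 2)
      else xx (j - 1) / xx (i - 1))"

definition is_eigenvalue :: "nat \<Rightarrow> (nat \<Rightarrow> nat \<Rightarrow> real) \<Rightarrow> complex \<Rightarrow> bool" where
  "is_eigenvalue n A \<mu> \<longleftrightarrow>
     (\<exists>v :: nat \<Rightarrow> complex. (\<exists>i\<in>{1..n}. v i \<noteq> 0) \<and>
        (\<forall>i\<in>{1..n}. (\<Sum>j=1..n. complex_of_real (A i j) * v j) = \<mu> * v i))"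

definition principal_right_eigenvector :: "nat \<Rightarrow> (nat \<Rightarrow> nat \<Rightarrow> real) \<Rightarrow> (nat \<Rightarrow> real) \<Rightarrow> bool" where
  "principal_right_eigenvector n A w \<longleftrightarrow>
     (\<forall>i\<in>{1..n}. w i > 0) \<and>
     (\<exists>r::real. (\<forall>i\<in>{1..n}. (\<Sum>j=1..n. A i j * w j) = r * w i) \<and>
        (\<forall>\<mu>. is_eigenvalue n A \<mu> \<longrightarrow> cmod \<mu> \<le> r))"

end

theory Submission
  imports Defs
begin

theorem mainTheorem8:
  fixes n :: nat and x :: "nat \<Rightarrow> real" and \<gamma> \<delta> :: real and w :: "nat \<Rightarrow> real"
  assumes "n \<ge> 4"
    and "\<forall>k\<in>{1..n-1}. x k > 0"
    and "\<gamma> > 0" and "\<delta> > 0" and "\<gamma> \<noteq> 1" and "\<delta> \<noteq> 1"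
    and "principal_right_eigenvector n (EM_matrix x \<gamma> \<delta>) w"
    and "\<gamma> < 1" and "\<delta> < 1"
  shows "\<forall>i\<in>{4..n}. w 1 / w i < x (i - 1)"
proof
  fix i assume i: "i \<in> {4..n}"
  define xx where "xx = (\<lambda>k. if k = 0 then 1 else x k)"
  from assms(7) obtain r where wpos: "\<forall>i\<in>{1..n}. w i > 0"
    and ev: "\<forall>i\<in>{1..n}. (\<Sum>j=1..n. EM_matrix x \<gamma> \<delta> i j * w j) = r * w i"
    unfolding principal_right_eigenvector_def by blast
  define S where "S = (\<Sum>j=1..n. xx (j-1) * w j)"
  have xxpos: "xx (j-1) > 0" if "j \<in> {1..n}" for j
  proof (cases "j = 1")
    case False
    hence "j - 1 \<in> {1..n-1}" using that by auto
    thus ?thesis using assms(2) False by (auto simp: xx_def)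
  qed (simp add: xx_def)
  have Spos: "S > 0" unfolding S_def
    using wpos xxpos assms(1) by (intro sum_pos) (auto intro: mult_pos_pos)
  have "i - 1 \<in> {1..n-1}" using i by auto
  hence xi: "x (i-1) > 0" using assms(2) by blast
  have rowi: "(\<Sum>j=1..n. EM_matrix x \<gamma> \<delta> i j * w j) = S / x (i-1)"
    unfolding S_def sum_divide_distrib
    using i by (intro sum.cong) (auto simp: EM_matrix_def xx_def Let_def)
  have row1e: "EM_matrix x \<gamma> \<delta> 1 j * w j = xx (j-1) * w j
      + (if j = 2 then (\<delta> - 1) * x 1 * w 2 else 0)
      + (if j = 3 then (\<gamma> - 1) * x 2 * w 3 else 0)" for j
    by (auto simp: EM_matrix_def xx_def Let_def algebra_simps)
  have row1: "(\<Sum>j=1..n. EM_matrix x \<gamma> \<delta> 1 j * w j) = S + (\<delta> - 1) * x 1 * w 2 + (\<gamma> - 1) * x 2 * w 3"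
    unfolding row1e sum.distrib S_def using assms(1)
    by (simp add: sum.delta)
  have w2: "w 2 > 0" and w3: "w 3 > 0" and w1: "w 1 > 0" and wi: "w i > 0"
    using wpos assms(1) i by auto
  have "1 \<in> {1..n-1}" "2 \<in> {1..n-1}" using assms(1) by auto
  hence x1: "x 1 > 0" and x2: "x 2 > 0" using assms(2) by blast+
  have a: "(\<delta> - 1) * x 1 * w 2 < 0" using assms(9) x1 w2
    by (simp add: mult_neg_pos)
  have b: "(\<gamma> - 1) * x 2 * w 3 < 0" using assms(8) x2 w3
    by (simp add: mult_neg_pos)
  have r1: "r * w 1 < S" using ev[rule_format, of 1] row1 a b assms(1) by auto
  have ri: "r * w i = S / x (i-1)" using ev[rule_format, of i] rowi i by auto
  hence "r * w i * x (i-1) = S" using xi by simp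
  with r1 have "r * w 1 < r * (w i * x (i-1))" by (simp add: algebra_simps)
  moreover have "r > 0"
  proof -
    have "S / x (i-1) > 0" using Spos xi by simp
    with ri have "r * w i > 0" by simp
    with wi show ?thesis by (simp add: zero_less_mult_iff)
  qed
  ultimately have "w 1 < w i * x (i-1)" by simp
  thus "w 1 / w i < x (i - 1)" using wi by (simp add: divide_less_eq mult.commute)
qed

end
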